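(* Let $\mathscr{M}$ be a finite rooted transition system in which every state is reachable from the initial state (connected, reachable). Let $\mathrm{Lind}$ be the Lindenbaum algebra of the propositional geometric theory $\mathbb{T}$ whose atoms are $\Delta(s,t)$ for states $s,t$ and whose axioms are $\Delta(s,t)\vdash\bot$ whenever $s\not\to t$, and $\top\vdash\bigvee_{t:\,s\to t}\Delta(s,t)$ for every state $s$ having at least one successor. Let $\mathrm{Aut}(\mathrm{graph})$ be the group of permutations $\sigma$ of the states with $s\to t\iff\sigma(s)\to\sigma(t)$, and let $\varphi:\mathrm{Aut}(\mathrm{graph})\to\mathrm{Aut}(\mathrm{Lind})$ be the group homomorphism induced by the atom permutation $\Delta(s,t)\mapsto\Delta(\sigma(s),\sigma(t))$. Then either $\ker\varphi$ is trivial or $\ker\varphi=\mathrm{Aut}(\mathrm{graph})$. Specifically, $\ker\varphi$ is trivial whenever some state has at least two successors, and $\ker\varphi=\mathrm{Aut}(\mathrm{graph})$ when every state has at most one successor.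
   Context: The Lindenbaum algebra of a propositional geometric theory is the frame presented by the atoms as generators, modulo the relations induced by the axioms (the quotient of the free frame on the atoms). *)

theory Defs
  imports "HOL-Combinatorics.Permutations"
begin

text \<open>Atoms of the theory: pairs (s,t) \<in> S \<times> S, standing for Delta(s,t).
Finite conjunctions of atoms are finite subsets F \<subseteq> S \<times> S (all finite since S is).

The Lindenbaum algebra (frame presented by the atoms modulo the axioms) is
realised in the standard way as the frame of saturated ideals of the free
meet-semilattice on the atoms: sets J of finite conjunctions that are
down-closed (F \<in> J, F \<subseteq> G implies G \<in> J, since G entails F) and closed under
the (meet-stabilised) axioms:
  Delta(s,t) |- False  (s not-> t):      insert (s,t) F \<in> J for every F;
  True |- OR_{t. s->t} Delta(s,t)  (s has a successor):
     if insert (s,t) F \<in> J for all successors t then F \<in> J.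
The frame order is inclusion; the element J denotes OR_{F\<in>J} AND F.\<close>

definition lind :: "'a set \<Rightarrow> ('a \<times> 'a) set \<Rightarrow> ('a \<times> 'a) set set set" where
  "lind S T = {J. J \<subseteq> Pow (S \<times> S)
     \<and> (\<forall>F\<in>J. \<forall>G. F \<subseteq> G \<and> G \<subseteq> S \<times> S \<longrightarrow> G \<in> J)
     \<and> (\<forall>s\<in>S. \<forall>t\<in>S. (s, t) \<notin> T \<longrightarrow> (\<forall>F. F \<subseteq> S \<times> S \<longrightarrow> insert (s, t) F \<in> J))
     \<and> (\<forall>s\<in>S. (\<exists>t. (s, t) \<in> T) \<longrightarrow>
          (\<forall>F. F \<subseteq> S \<times> S \<longrightarrow> (\<forall>t. (s, t) \<in> T \<longrightarrow> insert (s, t) F \<in> J) \<longrightarrow> F \<in> J))}"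

definition graph_aut :: "'a set \<Rightarrow> ('a \<times> 'a) set \<Rightarrow> ('a \<Rightarrow> 'a) set" where
  "graph_aut S T = {\<sigma>. \<sigma> permutes S \<and>
     (\<forall>s\<in>S. \<forall>t\<in>S. (s, t) \<in> T \<longleftrightarrow> (\<sigma> s, \<sigma> t) \<in> T)}"

definition lind_phi :: "('a \<Rightarrow> 'a) \<Rightarrow> ('a \<times> 'a) set set \<Rightarrow> ('a \<times> 'a) set set" where
  "lind_phi \<sigma> J = (\<lambda>F. (\<lambda>(a, b). (\<sigma> a, \<sigma> b)) ` F) ` J"

definition phi_kernel :: "'a set \<Rightarrow> ('a \<times> 'a) set \<Rightarrow> ('a \<Rightarrow> 'a) set" where
  "phi_kernel S T = {\<sigma> \<in> graph_aut S T. \<forall>J \<in> lind S T. lind_phi \<sigma> J = J}"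

end

theory Submission
  imports Defs
begin

lemma lind_D:
  assumes "J \<in> lind S T"
  shows "J \<subseteq> Pow (S \<times> S)"
    and "F \<in> J \<Longrightarrow> F \<subseteq> G \<Longrightarrow> G \<subseteq> S \<times> S \<Longrightarrow> G \<in> J"
    and "s \<in> S \<Longrightarrow> t \<in> S \<Longrightarrow> (s, t) \<notin> T \<Longrightarrow> F \<subseteq> S \<times> S \<Longrightarrow> insert (s, t) F \<in> J"
    and "s \<in> S \<Longrightarrow> (s, t0) \<in> T \<Longrightarrow> F \<subseteq> S \<times> S \<Longrightarrow> (\<And>t. (s, t) \<in> T \<Longrightarrow> insert (s, t) F \<in> J) \<Longrightarrow> F \<in> J"
proof -
  have h: "J \<subseteq> Pow (S \<times> S)
     \<and> (\<forall>F\<in>J. \<forall>G. F \<subseteq> G \<and> G \<subseteq> S \<times> S \<longrightarrow> G \<in> J)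
     \<and> (\<forall>s\<in>S. \<forall>t\<in>S. (s, t) \<notin> T \<longrightarrow> (\<forall>F. F \<subseteq> S \<times> S \<longrightarrow> insert (s, t) F \<in> J))
     \<and> (\<forall>s\<in>S. (\<exists>t. (s, t) \<in> T) \<longrightarrow>
          (\<forall>F. F \<subseteq> S \<times> S \<longrightarrow> (\<forall>t. (s, t) \<in> T \<longrightarrow> insert (s, t) F \<in> J) \<longrightarrow> F \<in> J))"
    using assms unfolding lind_def by (rule CollectD)
  note h1 = h[THEN conjunct1] and h2 = h[THEN conjunct2, THEN conjunct1]
    and h3 = h[THEN conjunct2, THEN conjunct2, THEN conjunct1]
    and h4 = h[THEN conjunct2, THEN conjunct2, THEN conjunct2]
  show "J \<subseteq> Pow (S \<times> S)" by (rule h1)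
  show "F \<in> J \<Longrightarrow> F \<subseteq> G \<Longrightarrow> G \<subseteq> S \<times> S \<Longrightarrow> G \<in> J" using h2 by blast
  show "s \<in> S \<Longrightarrow> t \<in> S \<Longrightarrow> (s, t) \<notin> T \<Longrightarrow> F \<subseteq> S \<times> S \<Longrightarrow> insert (s, t) F \<in> J"
    using h3 by blast
  show "s \<in> S \<Longrightarrow> (s, t0) \<in> T \<Longrightarrow> F \<subseteq> S \<times> S \<Longrightarrow> (\<And>t. (s, t) \<in> T \<Longrightarrow> insert (s, t) F \<in> J) \<Longrightarrow> F \<in> J"
    using h4 by blast
qed

lemma inv_aut:
  assumes "\<sigma> \<in> graph_aut S T" shows "inv \<sigma> \<in> graph_aut S T"
proof -
  have p: "\<sigma> permutes S" using assms by (simp add: graph_aut_def)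
  have pi: "inv \<sigma> permutes S" using permutes_inv[OF p] .
  have "\<forall>s\<in>S. \<forall>t\<in>S. (s, t) \<in> T \<longleftrightarrow> (inv \<sigma> s, inv \<sigma> t) \<in> T"
  proof (intro ballI)
    fix s t assume st: "s \<in> S" "t \<in> S"
    have "inv \<sigma> s \<in> S" "inv \<sigma> t \<in> S" using st permutes_in_image[OF pi] by auto
    then have "(inv \<sigma> s, inv \<sigma> t) \<in> T \<longleftrightarrow> (\<sigma> (inv \<sigma> s), \<sigma> (inv \<sigma> t)) \<in> T"
      using assms by (simp add: graph_aut_def)
    then show "(s, t) \<in> T \<longleftrightarrow> (inv \<sigma> s, inv \<sigma> t) \<in> T"
      using permutes_inverses(1)[OF p] by simp
  qed
  then show ?thesis using pi by (simp add: graph_aut_def)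
qed

lemma det_remove:
  assumes J: "J \<in> lind S T" and TS: "T \<subseteq> S \<times> S"
    and det: "\<forall>s\<in>S. \<forall>t1 t2. (s, t1) \<in> T \<and> (s, t2) \<in> T \<longrightarrow> t1 = t2"
    and fin: "finite F"
  shows "F \<subseteq> T \<Longrightarrow> G \<subseteq> S \<times> S \<Longrightarrow> F \<union> G \<in> J \<Longrightarrow> G \<in> J"
  using fin
proof (induction F arbitrary: G)
  case empty thus ?case by simp
next
  case (insert x F)
  obtain a b where x: "x = (a, b)" by fastforce
  have abT: "(a, b) \<in> T" using insert x by auto
  have ab: "a \<in> S" "b \<in> S" using abT TS by auto
  have e: "F \<union> insert x G = insert x F \<union> G" by auto
  have "insert x G \<in> J" using insert.IH[of "insert x G"] insert.prems ab x e by auto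
  show ?case
    apply (rule lind_D(4)[OF J ab(1) abT insert.prems(2)])
    using det ab abT \<open>insert x G \<in> J\<close> x by auto
qed

lemma det_image:
  assumes J: "J \<in> lind S T" and TS: "T \<subseteq> S \<times> S"
    and det: "\<forall>s\<in>S. \<forall>t1 t2. (s, t1) \<in> T \<and> (s, t2) \<in> T \<longrightarrow> t1 = t2"
    and fin: "finite S" and sg: "\<sigma> \<in> graph_aut S T" and F: "F \<in> J"
  shows "(\<lambda>(a, b). (\<sigma> a, \<sigma> b)) ` F \<in> J"
proof -
  have p: "\<sigma> permutes S" using sg by (simp add: graph_aut_def)
  have FS: "F \<subseteq> S \<times> S" using lind_D(1)[OF J] F by auto
  have mS: "(\<lambda>(a, b). (\<sigma> a, \<sigma> b)) ` F \<subseteq> S \<times> S"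
    using FS permutes_in_image[OF p] by auto
  show ?thesis
  proof (cases "{} \<in> J")
    case True
    then show ?thesis using lind_D(2)[OF J True _ mS] by auto
  next
    case False
    have "\<not> F \<subseteq> T"
    proof
      assume "F \<subseteq> T"
      moreover have "finite F" using FS fin by (meson finite_SigmaI finite_subset)
      ultimately show False using det_remove[OF J TS det, of F "{}"] F False by auto
    qed
    then obtain a b where abF: "(a, b) \<in> F" and abT: "(a, b) \<notin> T" by auto
    have ab: "a \<in> S" "b \<in> S" using abF FS by auto
    have "(\<sigma> a, \<sigma> b) \<notin> T" using sg ab abT by (simp add: graph_aut_def)
    moreover have "\<sigma> a \<in> S" "\<sigma> b \<in> S" using ab permutes_in_image[OF p] by auto
    moreover have "(\<lambda>(a, b). (\<sigma> a, \<sigma> b)) ` F = insert (\<sigma> a, \<sigma> b) ((\<lambda>(a, b). (\<sigma> a, \<sigma> b)) ` F)"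
      using abF by force
    ultimately show ?thesis using lind_D(3)[OF J, of "\<sigma> a" "\<sigma> b" "(\<lambda>(a, b). (\<sigma> a, \<sigma> b)) ` F"] mS
      by metis
  qed
qed

lemma det_fix:
  assumes J: "J \<in> lind S T" and TS: "T \<subseteq> S \<times> S"
    and det: "\<forall>s\<in>S. \<forall>t1 t2. (s, t1) \<in> T \<and> (s, t2) \<in> T \<longrightarrow> t1 = t2"
    and fin: "finite S" and sg: "\<sigma> \<in> graph_aut S T"
  shows "lind_phi \<sigma> J = J"
proof -
  have p: "\<sigma> permutes S" using sg by (simp add: graph_aut_def)
  have "(\<lambda>F. (\<lambda>(a, b). (\<sigma> a, \<sigma> b)) ` F) ` J \<subseteq> J"
    using det_image[OF J TS det fin sg] by (rule image_subsetI)
  moreover have "J \<subseteq> (\<lambda>F. (\<lambda>(a, b). (\<sigma> a, \<sigma> b)) ` F) ` J"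
  proof
    fix G assume G: "G \<in> J"
    let ?F = "(\<lambda>(a, b). (inv \<sigma> a, inv \<sigma> b)) ` G"
    have FJ: "?F \<in> J" using det_image[OF J TS det fin inv_aut[OF sg] G] .
    have eq: "(\<lambda>(a, b). (\<sigma> a, \<sigma> b)) ` ?F = G"
    proof -
      have "\<And>x. (\<lambda>(a, b). (\<sigma> a, \<sigma> b)) ((\<lambda>(a, b). (inv \<sigma> a, inv \<sigma> b)) x) = x"
        by (simp add: case_prod_beta permutes_inverses(1)[OF p])
      then show ?thesis by (simp add: image_image)
    qed
    show "G \<in> (\<lambda>F. (\<lambda>(a, b). (\<sigma> a, \<sigma> b)) ` F) ` J" by (rule image_eqI[where f="\<lambda>F. (\<lambda>(a, b). (\<sigma> a, \<sigma> b)) ` F", OF sym[OF eq] FJ])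
  qed
  ultimately show ?thesis unfolding lind_phi_def by (rule equalityI)
qed

lemma point_ideal:
  assumes PT: "P \<subseteq> T" and TS: "T \<subseteq> S \<times> S"
    and pt: "\<forall>s\<in>S. (\<exists>t. (s, t) \<in> T) \<longrightarrow> (\<exists>t. (s, t) \<in> P)"
  shows "{F. F \<subseteq> S \<times> S \<and> \<not> F \<subseteq> P} \<in> lind S T"
proof -
  let ?J = "{F. F \<subseteq> S \<times> S \<and> \<not> F \<subseteq> P}"
  have 1: "?J \<subseteq> Pow (S \<times> S)" by auto
  have 2: "\<forall>F\<in>?J. \<forall>G. F \<subseteq> G \<and> G \<subseteq> S \<times> S \<longrightarrow> G \<in> ?J" by auto
  have 3: "\<forall>s\<in>S. \<forall>t\<in>S. (s, t) \<notin> T \<longrightarrow> (\<forall>F. F \<subseteq> S \<times> S \<longrightarrow> insert (s, t) F \<in> ?J)"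
    using PT by auto
  have 4: "\<forall>s\<in>S. (\<exists>t. (s, t) \<in> T) \<longrightarrow>
          (\<forall>F. F \<subseteq> S \<times> S \<longrightarrow> (\<forall>t. (s, t) \<in> T \<longrightarrow> insert (s, t) F \<in> ?J) \<longrightarrow> F \<in> ?J)"
  proof (intro ballI allI impI)
    fix s F
    assume s: "s \<in> S" and ex: "\<exists>t. (s, t) \<in> T" and F: "F \<subseteq> S \<times> S"
      and h: "\<forall>t. (s, t) \<in> T \<longrightarrow> insert (s, t) F \<in> ?J"
    obtain t where t: "(s, t) \<in> P" using pt s ex by blast
    then have "insert (s, t) F \<in> ?J" using h PT by blast
    then show "F \<in> ?J" using t F by blast
  qed
  show ?thesis unfolding lind_def using 1 2 3 4 by (intro CollectI conjI)
qed

lemma kernel_point: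
  assumes k: "\<sigma> \<in> phi_kernel S T" and "P \<subseteq> T" "T \<subseteq> S \<times> S"
    and pt: "\<forall>s\<in>S. (\<exists>t. (s, t) \<in> T) \<longrightarrow> (\<exists>t. (s, t) \<in> P)"
    and ab: "a \<in> S" "b \<in> S" "(a, b) \<notin> P"
  shows "(\<sigma> a, \<sigma> b) \<notin> P"
proof -
  let ?J = "{F. F \<subseteq> S \<times> S \<and> \<not> F \<subseteq> P}"
  have J: "?J \<in> lind S T" using point_ideal assms by blast
  have e: "lind_phi \<sigma> ?J = ?J" using k J by (simp add: phi_kernel_def)
  have "{(a, b)} \<in> ?J" using ab by auto
  then have "(\<lambda>(a, b). (\<sigma> a, \<sigma> b)) ` {(a, b)} \<in> lind_phi \<sigma> ?J"
    unfolding lind_phi_def by blast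
  then have "{(\<sigma> a, \<sigma> b)} \<in> ?J" using e by simp
  then show ?thesis by auto
qed

lemma branch:
  assumes k: "\<sigma> \<in> phi_kernel S T" and TS: "T \<subseteq> S \<times> S"
    and u: "(u, t1) \<in> T" "(u, t2) \<in> T" "t1 \<noteq> t2"
  shows "\<sigma> u = u \<and> \<sigma> t1 = t1"
proof -
  have sg: "\<sigma> \<in> graph_aut S T" using k by (simp add: phi_kernel_def)
  define Px where "Px x = {p \<in> T. fst p = u \<longrightarrow> snd p = x}" for x
  have mem: "(a, b) \<in> Px x \<longleftrightarrow> (a, b) \<in> T \<and> (a = u \<longrightarrow> b = x)" for a b x
    unfolding Px_def by simp
  have ptx: "\<forall>s\<in>S. (\<exists>t. (s, t) \<in> T) \<longrightarrow> (\<exists>t. (s, t) \<in> Px x)" if ux: "(u, x) \<in> T" for x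
  proof (intro ballI impI)
    fix s assume "s \<in> S" "\<exists>t. (s, t) \<in> T"
    then obtain t where t: "(s, t) \<in> T" by blast
    show "\<exists>t. (s, t) \<in> Px x"
    proof (cases "s = u")
      case True
      then show ?thesis using ux mem by blast
    next
      case False
      then show ?thesis using t mem by blast
    qed
  qed
  have sub: "Px x \<subseteq> T" for x unfolding Px_def by blast
  have S: "u \<in> S" "t1 \<in> S" "t2 \<in> S" using u TS by auto
  have n1: "(u, t2) \<notin> Px t1" using mem u(3) by simp
  have "(\<sigma> u, \<sigma> t2) \<notin> Px t1"
    by (rule kernel_point[OF k sub TS ptx[OF u(1)] S(1) S(3) n1])
  moreover have "(\<sigma> u, \<sigma> t2) \<in> T" using sg S u by (simp add: graph_aut_def)
  ultimately have su: "\<sigma> u = u" using mem by simp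
  have "(\<sigma> u, \<sigma> t1) \<in> T" using sg S u by (simp add: graph_aut_def)
  then have x: "(u, \<sigma> t1) \<in> T" using su by simp
  show ?thesis
  proof (rule ccontr)
    assume "\<not> ?thesis"
    then have ne: "\<sigma> t1 \<noteq> t1" using su by simp
    have n2: "(u, t1) \<notin> Px (\<sigma> t1)" using mem ne by simp
    have "(\<sigma> u, \<sigma> t1) \<notin> Px (\<sigma> t1)"
      by (rule kernel_point[OF k sub TS ptx[OF x] S(1) S(2) n2])
    then show False using x su mem by simp
  qed
qed

lemma fix_succ:
  assumes k: "\<sigma> \<in> phi_kernel S T" and TS: "T \<subseteq> S \<times> S"
    and v: "\<sigma> v = v" "(v, t) \<in> T"
  shows "\<sigma> t = t"
proof (cases "\<exists>t2. (v, t2) \<in> T \<and> t2 \<noteq> t")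
  case True
  then show ?thesis using branch[OF k TS v(2)] by blast
next
  case False
  have sg: "\<sigma> \<in> graph_aut S T" using k by (simp add: phi_kernel_def)
  have "v \<in> S" "t \<in> S" using v TS by auto
  then have "(\<sigma> v, \<sigma> t) \<in> T" using sg v by (simp add: graph_aut_def)
  then have "(v, \<sigma> t) \<in> T" using v by simp
  then show ?thesis using False by blast
qed

lemma fix_rtrancl:
  assumes k: "\<sigma> \<in> phi_kernel S T" and TS: "T \<subseteq> S \<times> S"
  shows "(v, w) \<in> T\<^sup>* \<Longrightarrow> \<sigma> v = v \<Longrightarrow> \<sigma> w = w"
  by (induction rule: rtrancl_induct) (use fix_succ[OF k TS] in auto)

lemma aut_rtrancl:
  assumes sg: "\<sigma> \<in> graph_aut S T" and TS: "T \<subseteq> S \<times> S"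
  shows "(a, b) \<in> T\<^sup>* \<Longrightarrow> (\<sigma> a, \<sigma> b) \<in> T\<^sup>*"
proof (induction rule: rtrancl_induct)
  case base thus ?case by simp
next
  case (step y z)
  have "y \<in> S" "z \<in> S" using step TS by auto
  then have "(\<sigma> y, \<sigma> z) \<in> T" using sg step by (simp add: graph_aut_def)
  then show ?case using step by (meson rtrancl.rtrancl_into_rtrancl)
qed

lemma branch_trivial:
  assumes k: "\<sigma> \<in> phi_kernel S T" and TS: "T \<subseteq> S \<times> S"
    and s0: "s0 \<in> S" and reach: "\<forall>s\<in>S. (s0, s) \<in> T\<^sup>*"
    and s: "(s, t1) \<in> T" "(s, t2) \<in> T" "t1 \<noteq> t2"
  shows "\<sigma> = id"
proof -
  have sg: "\<sigma> \<in> graph_aut S T" using k by (simp add: phi_kernel_def)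
  have p: "\<sigma> permutes S" using sg by (simp add: graph_aut_def)
  have sS: "s \<in> S" using s TS by auto
  have sfix: "\<sigma> s = s" using branch[OF k TS s] by blast
  have nonbranch: "x = y" if "\<sigma> u \<noteq> u" "(u, x) \<in> T" "(u, y) \<in> T" for u x y
    using branch[OF k TS] that by blast
  have reach_nonfix: "\<sigma> u \<noteq> u" if "(u, v) \<in> T\<^sup>*" "\<sigma> v \<noteq> v" for u v
    using fix_rtrancl[OF k TS] that by blast
  have s0fix: "\<sigma> s0 = s0"
  proof (rule ccontr)
    assume ne: "\<sigma> s0 \<noteq> s0"
    define w where "w = \<sigma> s0"
    have wS: "w \<in> S" using s0 permutes_in_image[OF p] w_def by auto
    have iS: "inv \<sigma> s0 \<in> S" using s0 permutes_in_image[OF permutes_inv[OF p]] by auto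
    have "(\<sigma> s0, \<sigma> (inv \<sigma> s0)) \<in> T\<^sup>*" using aut_rtrancl[OF sg TS] reach iS by blast
    then have ws0: "(w, s0) \<in> T\<^sup>*" using permutes_inverses(1)[OF p] w_def by simp
    have "(s0, w) \<in> T\<^sup>*" using reach wS by blast
    moreover have "s0 \<noteq> w" using ne w_def by simp
    ultimately obtain x where x: "(s0, x) \<in> T" "(x, w) \<in> T\<^sup>*"
      by (metis converse_rtranclE)
    have xs0: "(x, s0) \<in> T\<^sup>*" using x(2) ws0 by simp
    have closed: "(v, s0) \<in> T\<^sup>*" if hu: "(u, s0) \<in> T\<^sup>*" and huv: "(u, v) \<in> T" for u v
    proof -
      have nu: "\<sigma> u \<noteq> u" using reach_nonfix[OF hu ne] .
      show ?thesis
      proof (cases "u = s0")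
        case True
        then have "v = x" using nonbranch[OF nu] huv x by blast
        then show ?thesis using xs0 by simp
      next
        case False
        then obtain y where y: "(u, y) \<in> T" "(y, s0) \<in> T\<^sup>*"
          using hu by (metis converse_rtranclE)
        then have "v = y" using nonbranch[OF nu] huv by blast
        then show ?thesis using y by simp
      qed
    qed
    have "(s0, s) \<in> T\<^sup>*" using reach sS by blast
    then have "(s, s0) \<in> T\<^sup>*"
      by (induction rule: rtrancl_induct) (use closed in auto)
    then have "\<sigma> s0 = s0" using fix_rtrancl[OF k TS] sfix by blast
    then show False using ne by simp
  qed
  show ?thesis
  proof
    fix x
    show "\<sigma> x = id x"
    proof (cases "x \<in> S")
      case True
      then show ?thesis using fix_rtrancl[OF k TS] reach s0fix by auto
    next
      case False
      then show ?thesis using permutes_not_in[OF p] by auto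
    qed
  qed
qed

lemma id_kernel: "id \<in> phi_kernel S T"
  unfolding phi_kernel_def graph_aut_def lind_phi_def
  by (auto simp: permutes_id)

theorem mainTheorem15:
  fixes S :: "'a set" and T :: "('a \<times> 'a) set" and s0 :: 'a
  assumes "finite S"
    and "T \<subseteq> S \<times> S"
    and "s0 \<in> S"
    and "\<forall>s\<in>S. (s0, s) \<in> T\<^sup>*"
  shows "(phi_kernel S T = {id} \<or> phi_kernel S T = graph_aut S T)
    \<and> ((\<exists>s\<in>S. \<exists>t1 t2. t1 \<noteq> t2 \<and> (s, t1) \<in> T \<and> (s, t2) \<in> T) \<longrightarrow> phi_kernel S T = {id})
    \<and> ((\<forall>s\<in>S. \<forall>t1 t2. (s, t1) \<in> T \<and> (s, t2) \<in> T \<longrightarrow> t1 = t2) \<longrightarrow> phi_kernel S T = graph_aut S T)"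
proof -
  have A: "phi_kernel S T = {id}" if ex: "\<exists>s\<in>S. \<exists>t1 t2. t1 \<noteq> t2 \<and> (s, t1) \<in> T \<and> (s, t2) \<in> T"
  proof -
    obtain s t1 t2 where "t1 \<noteq> t2" "(s, t1) \<in> T" "(s, t2) \<in> T" using ex by blast
    then show ?thesis using branch_trivial[OF _ assms(2-4)] id_kernel by blast
  qed
  have B: "phi_kernel S T = graph_aut S T" if det: "\<forall>s\<in>S. \<forall>t1 t2. (s, t1) \<in> T \<and> (s, t2) \<in> T \<longrightarrow> t1 = t2"
    unfolding phi_kernel_def using det_fix[OF _ assms(2) det assms(1)] by blast
  show ?thesis using A B by blast
qed

end
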